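(* Let $U$ be an open subset of $\mathbb{R}^2$ and $I,J$ two real intervals. Let $u:U\times J\to I$ be a $C^1$ function such that $u(\cdot,\cdot\,;s)$ is harmonic for every $s\in J$, and such that there exists a $C^1$ function $t:U\times I\to J$ with $u(x,y;t(x,y;z))=z$ for all $(x,y,z)\in U\times I$. Define on $U\times I$ the vector field $$\phi(x,y,z):=\big(2\nabla u(x,y;t(x,y;z)),\ |\nabla u(x,y;t(x,y;z))|^2\big),$$ where $\nabla u(x,y;t(x,y;z))$ denotes the gradient of $u$ with respect to $(x,y)$ evaluated at $(x,y;t(x,y;z))$. Then $\phi$ is divergence free in $U\times I$. *)

theory Defs
  imports "HOL-Analysis.Analysis"
begin

definition C1_on :: "('a::real_normed_vector) set \<Rightarrow> ('a \<Rightarrow> 'b::real_normed_vector) \<Rightarrow> bool" where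
  "C1_on S f \<longleftrightarrow> (\<exists>Df. (\<forall>p\<in>S. (f has_derivative Df p) (at p within S)) \<and>
                        (\<forall>v. continuous_on S (\<lambda>p. Df p v)))"

text \<open>Harmonic on an open set U of R^2: C^2 with vanishing Laplacian.
  g is the gradient, H p the derivative (Hessian) of the gradient at p.\<close>
definition harmonic_on :: "(real \<times> real) set \<Rightarrow> (real \<times> real \<Rightarrow> real) \<Rightarrow> bool" where
  "harmonic_on U f \<longleftrightarrow>
     (\<exists>g H. (\<forall>p\<in>U. (f has_derivative (\<lambda>h. g p \<bullet> h)) (at p)) \<and>
            (\<forall>p\<in>U. (g has_derivative H p) (at p)) \<and>
            (\<forall>v. continuous_on U (\<lambda>p. H p v)) \<and>
            (\<forall>p\<in>U. fst (H p (1,0)) + snd (H p (0,1)) = 0))"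

definition grad_xy :: "((real \<times> real) \<times> real \<Rightarrow> real) \<Rightarrow> real \<times> real \<Rightarrow> real \<Rightarrow> real \<times> real" where
  "grad_xy u p s = (SOME g. ((\<lambda>q. u (q, s)) has_derivative (\<lambda>h. g \<bullet> h)) (at p))"

definition phi_field :: "((real \<times> real) \<times> real \<Rightarrow> real) \<Rightarrow> ((real \<times> real) \<times> real \<Rightarrow> real)
                         \<Rightarrow> (real \<times> real) \<times> real \<Rightarrow> (real \<times> real) \<times> real" where
  "phi_field u t = (\<lambda>(p, z). let g = grad_xy u p (t (p, z)) in (2 *\<^sub>R g, (norm g)\<^sup>2))"

definition divergence_free_on :: "((real \<times> real) \<times> real) set \<Rightarrow>
     ((real \<times> real) \<times> real \<Rightarrow> (real \<times> real) \<times> real) \<Rightarrow> bool" where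
  "divergence_free_on S F \<longleftrightarrow>
     (\<forall>q\<in>S. \<exists>D. (F has_derivative D) (at q within S) \<and>
         fst (fst (D ((1,0),0))) + snd (fst (D ((0,1),0))) + snd (D ((0,0),1)) = 0)"

end

theory Submission
  imports Defs "HOL-Complex_Analysis.Complex_Analysis"
begin


lemma lin_pair_x:
  assumes "linear L" shows "L (h::real, 0::real) = h *\<^sub>R L (1,0)"
  using linear_cmul[OF assms, of h "(1,0)"] by simp

lemma lin_pair_y:
  assumes "linear L" shows "L (0::real, h::real) = h *\<^sub>R L (0,1)"
  using linear_cmul[OF assms, of h "(0,1)"] by simp

lemma partial1:
  assumes "(F has_derivative L) (at (a::real, b::real))"
  shows "((\<lambda>s. F (s, b)) has_derivative (\<lambda>h. L (h, 0))) (at a)"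
proof -
  have "((\<lambda>s. (s, b)) has_derivative (\<lambda>h. (h, 0))) (at a)"
    by (auto intro!: derivative_eq_intros)
  from has_derivative_compose[OF this assms] show ?thesis by simp
qed

lemma partial2:
  assumes "(F has_derivative L) (at (a::real, b::real))"
  shows "((\<lambda>s. F (a, s)) has_derivative (\<lambda>h. L (0, h))) (at b)"
proof -
  have "((\<lambda>s. (a, s)) has_derivative (\<lambda>h. (0, h))) (at b)"
    by (auto intro!: derivative_eq_intros)
  from has_derivative_compose[OF this assms] show ?thesis by simp
qed

lemma partial1_real:
  assumes "(F has_derivative L) (at (a::real, b::real))" and "\<And>h. L (h,0) = h * c"
  shows "((\<lambda>s. F (s, b)) has_real_derivative c) (at a)"
proof -
  have "(\<lambda>h. h * c) = (*) c" by (auto simp: mult.commute)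
  then show ?thesis using partial1[OF assms(1)] assms(2) by (simp add: has_field_derivative_def)
qed

lemma partial2_real:
  assumes "(F has_derivative L) (at (a::real, b::real))" and "\<And>h. L (0,h) = h * c"
  shows "((\<lambda>s. F (a, s)) has_real_derivative c) (at b)"
proof -
  have "(\<lambda>h. h * c) = (*) c" by (auto simp: mult.commute)
  then show ?thesis using partial2[OF assms(1)] assms(2) by (simp add: has_field_derivative_def)
qed

lemma hess_sym:
  fixes v :: "real \<times> real \<Rightarrow> real" and g :: "real \<times> real \<Rightarrow> real \<times> real"
  assumes "open U" and dv: "\<forall>q\<in>U. (v has_derivative (\<lambda>h. g q \<bullet> h)) (at q)"
    and dg: "\<forall>q\<in>U. (g has_derivative H q) (at q)"
    and cH: "\<forall>w. continuous_on U (\<lambda>q. H q w)" and pU: "p \<in> U"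
  shows "fst (H p (0,1)) = snd (H p (1,0))"
proof -
  obtain e where e: "e > 0" "ball p e \<subseteq> U" using assms(1) pU open_contains_ball by blast
  obtain x y where pxy: "p = (x, y)" by (cases p)
  define A where "A q = fst (H q (0,1))" for q
  define B where "B q = snd (H q (1,0))" for q
  have linH: "linear (H q)" if "q \<in> U" for q
    using dg that has_derivative_linear by blast
  have vx: "((\<lambda>s. v (s, b)) has_real_derivative fst (g (a, b))) (at a)" if "(a,b) \<in> U" for a b
    by (rule partial1_real[OF dv[rule_format, OF that]]) (simp add: inner_prod_def)
  have vy: "((\<lambda>s. v (a, s)) has_real_derivative snd (g (a, b))) (at b)" if "(a,b) \<in> U" for a b
    by (rule partial2_real[OF dv[rule_format, OF that]]) (simp add: inner_prod_def)
  have gxy: "((\<lambda>s. fst (g (a, s))) has_real_derivative A (a, b)) (at b)" if "(a,b) \<in> U" for a b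
  proof -
    have "((\<lambda>q. fst (g q)) has_derivative (\<lambda>h. fst (H (a,b) h))) (at (a,b))"
      using has_derivative_fst[OF dg[rule_format, OF that]] .
    then show ?thesis
      by (rule partial2_real) (subst lin_pair_y[OF linH[OF that]], simp add: A_def)
  qed
  have gyx: "((\<lambda>s. snd (g (s, b))) has_real_derivative B (a, b)) (at a)" if "(a,b) \<in> U" for a b
  proof -
    have "((\<lambda>q. snd (g q)) has_derivative (\<lambda>h. snd (H (a,b) h))) (at (a,b))"
      using has_derivative_snd[OF dg[rule_format, OF that]] .
    then show ?thesis
      by (rule partial1_real) (subst lin_pair_x[OF linH[OF that]], simp add: B_def)
  qed
  have sq: "(a, b) \<in> U" "dist (a,b) p \<le> 2 * h"
    if "0 < h" "h < e/2" "x \<le> a" "a \<le> x + h" "y \<le> b" "b \<le> y + h" for a b h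
  proof -
    have "dist (a,b) p = sqrt ((a-x)\<^sup>2 + (b-y)\<^sup>2)" by (simp add: pxy dist_Pair_Pair dist_real_def)
    also have "\<dots> \<le> \<bar>a-x\<bar> + \<bar>b-y\<bar>" by (rule sqrt_sum_squares_le_sum_abs)
    also have "\<dots> \<le> 2*h" using that by auto
    finally show "dist (a,b) p \<le> 2 * h" .
    then show "(a,b) \<in> U" using e that by (auto simp: dist_commute)
  qed
  have key: "\<exists>q1 q2. dist q1 p \<le> 2*h \<and> dist q2 p \<le> 2*h \<and> A q1 = B q2"
    if h: "0 < h" "h < e/2" for h
  proof -
    define D where "D = v (x+h, y+h) - v (x+h, y) - v (x, y+h) + v (x, y)"
    have d1: "((\<lambda>s. v (s, y+h) - v (s, y)) has_real_derivative (fst (g (s, y+h)) - fst (g (s, y)))) (at s)"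
      if "x \<le> s" "s \<le> x+h" for s
      using h that by (intro DERIV_diff vx sq(1)) auto
    obtain \<xi> where \<xi>: "x < \<xi>" "\<xi> < x + h"
      "(v (x+h, y+h) - v (x+h, y)) - (v (x, y+h) - v (x, y)) = h * (fst (g (\<xi>, y+h)) - fst (g (\<xi>, y)))"
      using MVT2[of x "x+h" "\<lambda>s. v (s, y+h) - v (s, y)" "\<lambda>s. fst (g (s, y+h)) - fst (g (s, y))", OF _ d1] h by auto
    have d2: "((\<lambda>s. fst (g (\<xi>, s))) has_real_derivative A (\<xi>, s)) (at s)"
      if "y \<le> s" "s \<le> y+h" for s
      using h that \<xi> by (intro gxy sq(1)) auto
    obtain \<eta> where \<eta>: "y < \<eta>" "\<eta> < y + h"
      "fst (g (\<xi>, y+h)) - fst (g (\<xi>, y)) = h * A (\<xi>, \<eta>)"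
      using MVT2[of y "y+h" "\<lambda>s. fst (g (\<xi>, s))" "\<lambda>s. A (\<xi>, s)", OF _ d2] h by auto
    have d3: "((\<lambda>s. v (x+h, s) - v (x, s)) has_real_derivative (snd (g (x+h, s)) - snd (g (x, s)))) (at s)"
      if "y \<le> s" "s \<le> y+h" for s
      using h that by (intro DERIV_diff vy sq(1)) auto
    obtain \<eta>' where \<eta>': "y < \<eta>'" "\<eta>' < y + h"
      "(v (x+h, y+h) - v (x, y+h)) - (v (x+h, y) - v (x, y)) = h * (snd (g (x+h, \<eta>')) - snd (g (x, \<eta>')))"
      using MVT2[of y "y+h" "\<lambda>s. v (x+h, s) - v (x, s)" "\<lambda>s. snd (g (x+h, s)) - snd (g (x, s))", OF _ d3] h by auto
    have d4: "((\<lambda>s. snd (g (s, \<eta>'))) has_real_derivative B (s, \<eta>')) (at s)"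
      if "x \<le> s" "s \<le> x+h" for s
      using h that \<eta>' by (intro gyx sq(1)) auto
    obtain \<xi>' where \<xi>': "x < \<xi>'" "\<xi>' < x + h"
      "snd (g (x+h, \<eta>')) - snd (g (x, \<eta>')) = h * B (\<xi>', \<eta>')"
      using MVT2[of x "x+h" "\<lambda>s. snd (g (s, \<eta>'))" "\<lambda>s. B (s, \<eta>')", OF _ d4] h by auto
    have "h * (h * A (\<xi>, \<eta>)) = h * (h * B (\<xi>', \<eta>'))"
      using \<xi>(3) \<eta>(3) \<eta>'(3) \<xi>'(3) by (simp add: algebra_simps)
    then have "A (\<xi>, \<eta>) = B (\<xi>', \<eta>')" using h by simp
    moreover have "dist (\<xi>, \<eta>) p \<le> 2*h" "dist (\<xi>', \<eta>') p \<le> 2*h"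
      using sq(2)[OF h, of \<xi> \<eta>] sq(2)[OF h, of \<xi>' \<eta>'] \<xi> \<eta> \<xi>' \<eta>' by auto
    ultimately show ?thesis by blast
  qed
  have cA: "isCont A p" and cB: "isCont B p"
    using cH assms(1) pU unfolding A_def B_def continuous_on_eq_continuous_at[OF assms(1)]
    by (auto intro!: continuous_intros)
  show ?thesis
  proof (rule ccontr)
    assume ne: "fst (H p (0,1)) \<noteq> snd (H p (1,0))"
    define \<epsilon> where "\<epsilon> = \<bar>A p - B p\<bar> / 2"
    have \<epsilon>: "\<epsilon> > 0" using ne by (simp add: \<epsilon>_def A_def B_def)
    obtain d1 where d1: "d1 > 0" "\<And>q. dist q p < d1 \<Longrightarrow> dist (A q) (A p) < \<epsilon>"
      using cA \<epsilon> unfolding continuous_at_eps_delta by blast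
    obtain d2 where d2: "d2 > 0" "\<And>q. dist q p < d2 \<Longrightarrow> dist (B q) (B p) < \<epsilon>"
      using cB \<epsilon> unfolding continuous_at_eps_delta by blast
    define h where "h = min (e/4) (min d1 d2 / 4)"
    have h: "0 < h" "h < e/2" "2*h < d1" "2*h < d2" using e d1 d2 by (auto simp: h_def)
    obtain q1 q2 where q: "dist q1 p \<le> 2*h" "dist q2 p \<le> 2*h" "A q1 = B q2" using key[OF h(1,2)] by blast
    have "dist (A q1) (A p) < \<epsilon>" "dist (B q2) (B p) < \<epsilon>" using q(1,2) h d1(2)[of q1] d2(2)[of q2] by linarith+
    then have "\<bar>A p - B p\<bar> < 2 * \<epsilon>" using q(3) by (simp add: dist_real_def)
    then show False by (simp add: \<epsilon>_def)
  qed
qed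



lemma harm_holo:
  fixes v :: "real \<times> real \<Rightarrow> real" and g :: "real \<times> real \<Rightarrow> real \<times> real"
  assumes "open U" and dv: "\<forall>q\<in>U. (v has_derivative (\<lambda>h. g q \<bullet> h)) (at q)"
    and dg: "\<forall>q\<in>U. (g has_derivative H q) (at q)"
    and cH: "\<forall>w. continuous_on U (\<lambda>q. H q w)"
    and lap: "\<forall>q\<in>U. fst (H q (1,0)) + snd (H q (0,1)) = 0"
    and zU: "(Re z, Im z) \<in> U"
  shows "((\<lambda>z. complex_of_real (fst (g (Re z, Im z))) - \<i> * complex_of_real (snd (g (Re z, Im z))))
           has_field_derivative
          (complex_of_real (fst (H (Re z, Im z) (1,0))) - \<i> * complex_of_real (snd (H (Re z, Im z) (1,0))))) (at z)"
    (is "(?f has_field_derivative ?w) _")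
   and "((\<lambda>z. v (Re z, Im z)) has_derivative
          (\<lambda>h. Re ((complex_of_real (fst (g (Re z, Im z))) - \<i> * complex_of_real (snd (g (Re z, Im z)))) * h))) (at z)"
proof -
  define q where "q = (Re z, Im z)"
  have qU: "q \<in> U" using zU q_def by simp
  have rp: "((\<lambda>z. (Re z, Im z)) has_derivative (\<lambda>h. (Re h, Im h))) (at z)"
    by (intro bounded_linear_imp_has_derivative bounded_linear_Pair bounded_linear_Re bounded_linear_Im)
  have G: "((\<lambda>z. g (Re z, Im z)) has_derivative (\<lambda>h. H q (Re h, Im h))) (at z)"
    using has_derivative_compose[OF rp dg[rule_format, OF qU[unfolded q_def]]] q_def by simp
  have linH: "linear (H q)" using dg qU has_derivative_linear by blast
  have sym: "fst (H q (0,1)) = snd (H q (1,0))"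
    by (rule hess_sym[OF assms(1) dv dg cH qU])
  have Hh: "H q (Re h, Im h) = (Re h * fst (H q (1,0)) + Im h * snd (H q (1,0)),
                                Re h * snd (H q (1,0)) - Im h * fst (H q (1,0)))" for h
  proof -
    have "H q (Re h, Im h) = H q (Re h, 0) + H q (0, Im h)"
      using linear_add[OF linH, of "(Re h, 0)" "(0, Im h)"] by simp
    also have "\<dots> = Re h *\<^sub>R H q (1,0) + Im h *\<^sub>R H q (0,1)"
      using lin_pair_x[OF linH, of "Re h"] lin_pair_y[OF linH, of "Im h"] by simp
    finally show ?thesis using sym lap[rule_format, OF qU] by (simp add: prod_eq_iff, simp add: algebra_simps eq_neg_iff_add_eq_0 flip: distrib_left)
  qed
  have "(?f has_derivative (\<lambda>h. complex_of_real (fst (H q (Re h, Im h))) - \<i> * complex_of_real (snd (H q (Re h, Im h))))) (at z)"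
    by (intro derivative_eq_intros bounded_linear.has_derivative[OF bounded_linear_of_real]
          has_derivative_fst has_derivative_snd G) (auto intro: G)
  moreover have "(\<lambda>h. complex_of_real (fst (H q (Re h, Im h))) - \<i> * complex_of_real (snd (H q (Re h, Im h)))) = (*) ?w"
    by (rule ext) (simp add: Hh[unfolded q_def] q_def complex_eq_iff algebra_simps)
  ultimately show "(?f has_field_derivative ?w) (at z)"
    by (simp add: has_field_derivative_def)
  have "((\<lambda>z. v (Re z, Im z)) has_derivative (\<lambda>h. g q \<bullet> (Re h, Im h))) (at z)"
    using has_derivative_compose[OF rp dv[rule_format, OF qU[unfolded q_def]]] q_def by simp
  moreover have "(\<lambda>h. g q \<bullet> (Re h, Im h)) = (\<lambda>h. Re ((complex_of_real (fst (g (Re z, Im z))) - \<i> * complex_of_real (snd (g (Re z, Im z)))) * h))"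
    by (rule ext) (simp add: q_def inner_prod_def algebra_simps)
  ultimately show "((\<lambda>z. v (Re z, Im z)) has_derivative
          (\<lambda>h. Re ((complex_of_real (fst (g (Re z, Im z))) - \<i> * complex_of_real (snd (g (Re z, Im z)))) * h))) (at z)"
    by simp
qed

lemma harm_formula:
  fixes v :: "real \<times> real \<Rightarrow> real" and g :: "real \<times> real \<Rightarrow> real \<times> real"
  assumes "open U" and dv: "\<forall>q\<in>U. (v has_derivative (\<lambda>h. g q \<bullet> h)) (at q)"
    and dg: "\<forall>q\<in>U. (g has_derivative H q) (at q)"
    and cH: "\<forall>w. continuous_on U (\<lambda>q. H q w)"
    and lap: "\<forall>q\<in>U. fst (H q (1,0)) + snd (H q (0,1)) = 0"
    and ball: "ball c R \<subseteq> U" and r: "0 < r" "r < R"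
  shows "g c = (2/r) *\<^sub>R (Re (integral {0..1} (\<lambda>t. complex_of_real (v (fst c + r * cos (2*pi*t), snd c + r * sin (2*pi*t)))
                    * exp (2 * complex_of_real pi * \<i> * complex_of_real t))),
                          Im (integral {0..1} (\<lambda>t. complex_of_real (v (fst c + r * cos (2*pi*t), snd c + r * sin (2*pi*t)))
                    * exp (2 * complex_of_real pi * \<i> * complex_of_real t))))"
proof -
  define cz where "cz = Complex (fst c) (snd c)"
  define S where "S = ball cz R"
  have inU: "(Re z, Im z) \<in> U" if "z \<in> S" for z
  proof -
    have "dist (Re z, Im z) (fst c, snd c) = sqrt ((Re z - fst c)\<^sup>2 + (Im z - snd c)\<^sup>2)"
      by (simp only: dist_Pair_Pair dist_real_def power2_abs)
    moreover have "dist z cz = sqrt ((Re z - fst c)\<^sup>2 + (Im z - snd c)\<^sup>2)"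
      by (simp add: dist_norm cmod_def cz_def)
    ultimately have "dist (Re z, Im z) (fst c, snd c) = dist z cz" by simp
    then have "(Re z, Im z) \<in> ball c R" using that by (simp add: S_def dist_commute)
    then show ?thesis using ball by blast
  qed
  define f where "f z = complex_of_real (fst (g (Re z, Im z))) - \<i> * complex_of_real (snd (g (Re z, Im z)))" for z
  have fder: "\<exists>f'. (f has_field_derivative f') (at z)" if "z \<in> S" for z
    using harm_holo(1)[OF assms(1) dv dg cH lap inU[OF that]] unfolding f_def by blast
  have holf: "f holomorphic_on S"
    using fder by (simp add: holomorphic_on_open S_def)
  obtain F where F0: "\<And>z. z \<in> S \<Longrightarrow> (F has_field_derivative f z) (at z within S)"
    using holomorphic_convex_primitive'[OF _ _ holf] by (auto simp: S_def)
  have F: "(F has_field_derivative f z) (at z)" if "z \<in> S" for z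
    using F0[OF that] at_within_open[OF that] by (simp add: S_def)
  have holF: "F holomorphic_on S"
    unfolding holomorphic_on_open[OF open_ball[of cz R, folded S_def]] using F by blast
  have Vder: "((\<lambda>z. v (Re z, Im z)) has_derivative (\<lambda>h. Re (f z * h))) (at z)" if "z \<in> S" for z
    using harm_holo(2)[OF assms(1) dv dg cH lap inU[OF that]] unfolding f_def by blast
  have D0: "((\<lambda>z. Re (F z) - v (Re z, Im z)) has_derivative (\<lambda>h. 0)) (at z within S)" if "z \<in> S" for z
  proof -
    have "((\<lambda>z. Re (F z)) has_derivative (\<lambda>h. Re (f z * h))) (at z)"
      using has_derivative_Re[OF F[OF that, unfolded has_field_derivative_def]] .
    from has_derivative_diff[OF this Vder[OF that]] show ?thesis
      by (simp add: has_derivative_at_withinI)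
  qed
  obtain K where K: "\<And>z. z \<in> S \<Longrightarrow> Re (F z) - v (Re z, Im z) = K"
    using has_derivative_zero_constant[OF convex_ball[of cz R, folded S_def] D0] by blast
  define e where "e t = exp (2 * complex_of_real pi * \<i> * complex_of_real t)" for t
  define P where "P t = cz + r * e t" for t
  have cp: "circlepath cz r = P" by (simp add: circlepath P_def[abs_def] e_def)
  have vd: "vector_derivative P (at t) = 2 * pi * \<i> * r * e t" for t
    using vector_derivative_circlepath[of cz r t] by (simp add: cp e_def)
  have PS: "P t \<in> S" for t
    using r by (simp add: P_def S_def dist_norm norm_mult e_def)
  have img: "path_image (circlepath cz r) \<subseteq> S"
    using r by (auto simp: S_def path_image_circlepath)
  have e_norm: "e t * cnj (e t) = 1" for t
  proof -
    have "cmod (e t) = 1" by (simp add: e_def norm_exp_eq_Re)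
    then show ?thesis using complex_norm_square[of "e t"] by simp
  qed
  have ReP: "Re (P t) = fst c + r * cos (2*pi*t)" and ImP: "Im (P t) = snd c + r * sin (2*pi*t)" for t
    by (simp_all add: P_def e_def cz_def Re_exp Im_exp)
  have Ia: "(F has_contour_integral 0) (circlepath cz r)"
    by (rule Cauchy_theorem_convex_simple[OF holF]) (use img in \<open>auto simp: S_def\<close>)
  have Ic: "((\<lambda>_. 1) has_contour_integral 0) (circlepath cz r)"
    by (rule Cauchy_theorem_convex_simple[OF holomorphic_on_const]) (use img in \<open>auto simp: S_def\<close>)
  have Ib: "((\<lambda>u. F u / (u - cz) ^ Suc 1) has_contour_integral (2 * pi * \<i> / fact 1 * (deriv ^^ 1) F cz)) (circlepath cz r)"
  proof (rule Cauchy_has_contour_integral_higher_derivative_circlepath)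
    have sub: "cball cz r \<subseteq> S" using r by (auto simp: S_def)
    show "continuous_on (cball cz r) F"
      by (rule holomorphic_on_imp_continuous_on[OF holomorphic_on_subset[OF holF sub]])
    show "F holomorphic_on ball cz r"
      using holomorphic_on_subset[OF holF] sub ball_subset_cball by blast
  qed (use r in auto)
  have dF: "deriv F cz = f cz" using F[of cz] r by (simp add: DERIV_imp_deriv S_def)
  have Ia': "((\<lambda>t. F (P t) * e t) has_integral 0) {0..1}"
  proof -
    have "((\<lambda>t. F (P t) * (2 * pi * \<i> * r * e t)) has_integral 0) {0..1}"
      using Ia by (simp add: has_contour_integral cp vd)
    from has_integral_mult_left[OF this, of "1 / (2 * pi * \<i> * r)"] r show ?thesis
      by (simp add: field_simps)
  qed
  have Ic': "(e has_integral 0) {0..1}"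
  proof -
    have "((\<lambda>t. 2 * pi * \<i> * r * e t) has_integral 0) {0..1}"
      using Ic by (simp add: has_contour_integral cp vd)
    from has_integral_mult_left[OF this, of "1 / (2 * pi * \<i> * r)"] r show ?thesis
      by (simp add: field_simps)
  qed
  have Ib': "((\<lambda>t. F (P t) * cnj (e t)) has_integral r * f cz) {0..1}"
  proof -
    have I0: "((\<lambda>t. F (P t) / (P t - cz) ^ 2 * (2 * complex_of_real pi * \<i> * complex_of_real r * e t)) has_integral 2 * complex_of_real pi * \<i> * f cz) {0..1}"
      using Ib by (simp add: has_contour_integral cp vd dF power2_eq_square)
    have "((\<lambda>t. r / (2 * complex_of_real pi * \<i>) * (F (P t) / (P t - cz) ^ 2 * (2 * complex_of_real pi * \<i> * complex_of_real r * e t))) has_integral r * f cz) {0..1}"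
      by (rule has_integral_eq_rhs[OF has_integral_mult_right[OF I0]]) (simp add: field_simps)
    moreover have "complex_of_real r / (2 * complex_of_real pi * \<i>) * (F (P t) / (P t - cz) ^ 2 * (2 * complex_of_real pi * \<i> * complex_of_real r * e t)) = F (P t) * cnj (e t)" for t
    proof -
      have e0: "e t \<noteq> 0" by (simp add: e_def)
      have ce: "cnj (e t) = 1 / e t" using e_norm[of t] e0 by (simp add: field_simps)
      have d: "P t - cz = complex_of_real r * e t" by (simp add: P_def)
      have "complex_of_real r / (2 * complex_of_real pi * \<i>) * (F (P t) / (P t - cz) ^ 2 * (2 * complex_of_real pi * \<i> * complex_of_real r * e t)) = F (P t) / e t"
        unfolding d using r e0 by (simp add: field_simps power2_eq_square)
      then show ?thesis by (simp add: ce)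
    qed
    ultimately show ?thesis by (simp only:)
  qed
  have Iall: "((\<lambda>t. (1/2) * (F (P t) * e t) + (1/2) * cnj (F (P t) * cnj (e t)) - of_real K * e t)
              has_integral ((1/2) * 0 + (1/2) * cnj (r * f cz) - of_real K * 0)) {0..1}"
    by (intro has_integral_diff has_integral_add has_integral_mult_right
          has_integral_linear[OF Ib' bounded_linear_cnj, unfolded o_def] Ia' Ic')
  have eq: "(1/2) * (F (P t) * e t) + (1/2) * cnj (F (P t) * cnj (e t)) - of_real K * e t
           = complex_of_real (v (fst c + r * cos (2*pi*t), snd c + r * sin (2*pi*t))) * e t" for t
  proof -
    have "v (Re (P t), Im (P t)) = Re (F (P t)) - K" using K[OF PS[of t]] by simp
    then have "complex_of_real (v (fst c + r * cos (2*pi*t), snd c + r * sin (2*pi*t))) = (F (P t) + cnj (F (P t))) / 2 - of_real K"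
      by (simp add: ReP ImP complex_add_cnj)
    moreover have "(1/2) * (F (P t) * e t) + (1/2) * cnj (F (P t) * cnj (e t)) - of_real K * e t
       = ((F (P t) + cnj (F (P t))) / 2 - of_real K) * e t"
      by (simp add: algebra_simps)
    ultimately show ?thesis by simp
  qed
  have X: "integral {0..1} (\<lambda>t. complex_of_real (v (fst c + r * cos (2*pi*t), snd c + r * sin (2*pi*t))) * e t)
          = (1/2) * cnj (r * f cz)"
    using Iall eq by (simp add: integral_unique)
  define I where "I = integral {0..1} (\<lambda>t. complex_of_real (v (fst c + r * cos (2*pi*t), snd c + r * sin (2*pi*t))) * e t)"
  have "Re I = r/2 * fst (g c)" "Im I = r/2 * snd (g c)"
    using X unfolding I_def[symmetric] by (simp_all add: f_def cz_def complex_eq_iff)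
  then show ?thesis
    using r unfolding e_def[symmetric] I_def[symmetric] by (simp add: prod_eq_iff field_simps)
qed



lemma inner_fun_eq:
  fixes a b :: "real \<times> real"
  assumes "(\<lambda>h. a \<bullet> h) = (\<lambda>h. b \<bullet> h)" shows "a = b"
proof -
  have "a \<bullet> (1,0) = b \<bullet> (1,0)" "a \<bullet> (0,1) = b \<bullet> (0,1)" using assms by metis+
  then show ?thesis by (simp add: inner_prod_def prod_eq_iff)
qed

lemma grad_xy_harm:
  assumes "open U" and h: "harmonic_on U (\<lambda>p. u (p, s))"
  obtains H where
    "\<forall>q\<in>U. ((\<lambda>q. u (q, s)) has_derivative (\<lambda>h. grad_xy u q s \<bullet> h)) (at q)"
    "\<forall>q\<in>U. ((\<lambda>q. grad_xy u q s) has_derivative H q) (at q)"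
    "\<forall>w. continuous_on U (\<lambda>q. H q w)"
    "\<forall>q\<in>U. fst (H q (1,0)) + snd (H q (0,1)) = 0"
proof -
  obtain g H where g: "\<forall>p\<in>U. ((\<lambda>p. u (p, s)) has_derivative (\<lambda>h. g p \<bullet> h)) (at p)"
    and H: "\<forall>p\<in>U. (g has_derivative H p) (at p)" "\<forall>v. continuous_on U (\<lambda>p. H p v)"
      "\<forall>p\<in>U. fst (H p (1,0)) + snd (H p (0,1)) = 0"
    using h unfolding harmonic_on_def by blast
  have eq: "grad_xy u q s = g q" if "q \<in> U" for q
  proof -
    have "((\<lambda>p. u (p, s)) has_derivative (\<lambda>h. grad_xy u q s \<bullet> h)) (at q)"
      unfolding grad_xy_def by (rule someI[where x="g q"]) (use g that in blast)
    from has_derivative_unique[OF this g[rule_format, OF that]] show ?thesis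
      by (rule inner_fun_eq)
  qed
  show ?thesis
  proof (rule that[of H])
    show "\<forall>q\<in>U. ((\<lambda>q. u (q, s)) has_derivative (\<lambda>h. grad_xy u q s \<bullet> h)) (at q)"
      using g eq by simp
    show "\<forall>q\<in>U. ((\<lambda>q. grad_xy u q s) has_derivative H q) (at q)"
      using H(1) eq assms(1)
      by (metis (no_types, lifting) has_derivative_transform_within_open)
  qed (use H in auto)
qed

lemma C1_cont:
  assumes "C1_on S u" shows "continuous_on S u"
proof -
  obtain Df where "\<forall>p\<in>S. (u has_derivative Df p) (at p within S)"
    using assms unfolding C1_on_def by blast
  then show ?thesis
    using continuous_on_eq_continuous_within has_derivative_continuous by blast
qed

lemma circ_dist:
  fixes c :: "real \<times> real" assumes "r > 0"
  shows "dist (fst c + r * cos th, snd c + r * sin th) c = r"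
proof -
  have "(r * cos th)\<^sup>2 + (r * sin th)\<^sup>2 = r\<^sup>2"
    by (simp add: power_mult_distrib flip: distrib_left)
  then have "sqrt ((r * cos th)\<^sup>2 + (r * sin th)\<^sup>2) = r" using assms by simp
  moreover have "dist (fst c + r * cos th, snd c + r * sin th) c
     = sqrt ((r * cos th)\<^sup>2 + (r * sin th)\<^sup>2)"
    by (cases c) (simp add: dist_Pair_Pair dist_real_def)
  ultimately show ?thesis by simp
qed

lemma grad_joint:
  fixes U :: "(real \<times> real) set" and J :: "real set" and u :: "(real \<times> real) \<times> real \<Rightarrow> real"
  assumes oU: "open U" and iJ: "is_interval J" and C1: "C1_on (U \<times> J) u"
    and harm: "\<forall>s\<in>J. harmonic_on U (\<lambda>p. u (p, s))" and pU: "p \<in> U" and sJ: "s0 \<in> J"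
  shows "\<exists>DG. ((\<lambda>x. grad_xy u (fst x) (snd x)) has_derivative DG) (at (p, s0) within U \<times> J)"
proof -
  obtain Df where Df: "\<forall>q\<in>U \<times> J. (u has_derivative Df q) (at q within U \<times> J)"
      "\<forall>v. continuous_on (U \<times> J) (\<lambda>q. Df q v)"
    using C1 unfolding C1_on_def by blast
  obtain e where e: "e > 0" "ball p e \<subseteq> U" using oU pU open_contains_ball by blast
  define r where "r = e / 3"
  have r: "r > 0" using e by (simp add: r_def)
  define U' where "U' = ball p r \<times> J"
  define E where "E t = exp (2 * complex_of_real pi * \<i> * complex_of_real t)" for t :: real
  define Q where "Q x t = ((fst (fst x) + r * cos (2*pi*t), snd (fst x) + r * sin (2*pi*t)), snd x)"
    for x :: "(real \<times> real) \<times> real" and t :: real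
  define f where "f x t = complex_of_real (u (Q x t)) * E t" for x t
  define fx where "fx x t = Blinfun (\<lambda>w. complex_of_real (Df (Q x t) w) * E t)" for x t
  have ball2: "ball c (2*r) \<subseteq> U" if "c \<in> ball p r" for c
  proof
    fix y assume "y \<in> ball c (2*r)"
    then have "dist p y < e" using that dist_triangle[of p y c] by (simp add: r_def dist_commute)
    then show "y \<in> U" using e by auto
  qed
  have QUJ: "Q x t \<in> U \<times> J" if "x \<in> U'" for x t
  proof -
    obtain c s where x: "x = (c, s)" by (cases x)
    have c: "c \<in> ball p r" and s: "s \<in> J" using that x U'_def by auto
    have "dist c (fst c + r * cos (2*pi*t), snd c + r * sin (2*pi*t)) = r"
      using circ_dist[OF r, of c "2*pi*t"] by (simp add: dist_commute)
    then have "(fst c + r * cos (2*pi*t), snd c + r * sin (2*pi*t)) \<in> ball c (2*r)" using r by simp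
    then show ?thesis using ball2[OF c] s x by (auto simp: Q_def)
  qed
  have contu: "continuous_on (U \<times> J) u" by (rule C1_cont[OF C1])
  have Qd: "((\<lambda>x. Q x t) has_derivative (\<lambda>w. w)) (at x within S)" for x t S
  proof -
    have "(\<lambda>x. Q x t) = (\<lambda>x. x + ((r * cos (2*pi*t), r * sin (2*pi*t)), 0))"
      by (auto simp: Q_def)
    then show ?thesis using has_derivative_add_const[OF has_derivative_ident] by simp
  qed
  have blE: "bounded_linear (\<lambda>y::real. complex_of_real y * E t)" for t
    by (rule bounded_linear_compose[OF bounded_linear_mult_left bounded_linear_of_real])
  have fxd: "((\<lambda>x. f x t) has_derivative blinfun_apply (fx x t)) (at x within U')"
    if "x \<in> U'" for x t
  proof -
    have du: "(u has_derivative Df (Q x t)) (at (Q x t) within (\<lambda>x. Q x t) ` U')"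
      by (rule has_derivative_subset[OF Df(1)[rule_format, OF QUJ[OF that]]]) (use QUJ in blast)
    have "((u \<circ> (\<lambda>x. Q x t)) has_derivative (Df (Q x t) \<circ> (\<lambda>w. w))) (at x within U')"
      by (rule diff_chain_within[OF Qd du])
    from bounded_linear.has_derivative[OF blE this]
    have "((\<lambda>x. f x t) has_derivative (\<lambda>w. complex_of_real (Df (Q x t) w) * E t)) (at x within U')"
      by (simp add: f_def o_def)
    moreover have "bounded_linear (\<lambda>w. complex_of_real (Df (Q x t) w) * E t)"
      using bounded_linear_compose[OF blE has_derivative_bounded_linear[OF du]] .
    ultimately show ?thesis by (simp add: fx_def bounded_linear_Blinfun_apply)
  qed
  have cQ: "continuous_on A (\<lambda>y. Q (fst y) (snd y))" for A
    unfolding Q_def by (intro continuous_intros)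
  have cQ1: "continuous_on A (\<lambda>t. Q x t)" for A x
    unfolding Q_def by (intro continuous_intros)
  have cE: "continuous_on A E" for A
    unfolding E_def by (intro continuous_intros)
  have intf: "f x integrable_on cbox 0 1" if "x \<in> U'" for x
  proof -
    have "continuous_on (cbox 0 1) (\<lambda>t. u (Q x t))"
      by (rule continuous_on_compose2[OF contu cQ1]) (use QUJ that in blast)
    then have "continuous_on (cbox 0 1) (f x)"
      unfolding f_def by (intro continuous_intros cE)
    then show ?thesis by (rule integrable_continuous)
  qed
  have cfx: "continuous_on (U' \<times> cbox 0 1) (\<lambda>(x, t). fx x t)"
  proof (rule continuous_on_blinfun_componentwise)
    fix i :: "(real \<times> real) \<times> real"
    have "continuous_on (U' \<times> cbox 0 1) (\<lambda>y. Df (Q (fst y) (snd y)) i)"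
      by (rule continuous_on_compose2[OF Df(2)[rule_format, of i] cQ], rule image_subsetI, rule QUJ, auto)
    then have "continuous_on (U' \<times> cbox 0 1) (\<lambda>y. complex_of_real (Df (Q (fst y) (snd y)) i) * E (snd y))"
      by (intro continuous_intros continuous_on_compose2[OF cE, of _ snd]) auto
    moreover have "blinfun_apply ((\<lambda>(x, t). fx x t) y) i = complex_of_real (Df (Q (fst y) (snd y)) i) * E (snd y)"
      if "y \<in> U' \<times> cbox 0 1" for y
    proof -
      have "bounded_linear (Df (Q (fst y) (snd y)))"
        using Df(1) QUJ that has_derivative_bounded_linear by (metis mem_Sigma_iff prod.collapse)
      then have "bounded_linear (\<lambda>w. complex_of_real (Df (Q (fst y) (snd y)) w) * E (snd y))"
        using bounded_linear_compose[OF blE] by blast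
      then show ?thesis by (simp add: fx_def case_prod_beta bounded_linear_Blinfun_apply)
    qed
    ultimately show "continuous_on (U' \<times> cbox 0 1) (\<lambda>y. blinfun_apply ((\<lambda>(x, t). fx x t) y) i)"
      using continuous_on_cong by (smt (verit))
  qed
  have x0: "(p, s0) \<in> U'" using sJ r by (simp add: U'_def)
  have cvx: "convex U'" unfolding U'_def
    by (intro convex_Times convex_ball is_interval_convex iJ)
  have L: "((\<lambda>x. integral (cbox 0 1) (f x)) has_derivative blinfun_apply (integral (cbox 0 1) (fx (p, s0)))) (at (p, s0) within U')"
    by (rule leibniz_rule[OF fxd intf cfx x0 cvx])
  define X where "X x = integral (cbox 0 1) (f x)" for x
  have L2: "((\<lambda>x. (2/r) *\<^sub>R (Re (X x), Im (X x))) has_derivative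
      (\<lambda>w. (2/r) *\<^sub>R (Re (integral (cbox 0 1) (fx (p, s0)) w), Im (integral (cbox 0 1) (fx (p, s0)) w)))) (at (p, s0) within U')"
    unfolding X_def using L by (intro derivative_eq_intros) (auto simp: cbox_interval)
  have Geq: "(2/r) *\<^sub>R (Re (X x), Im (X x)) = grad_xy u (fst x) (snd x)" if "x \<in> U'" for x
  proof -
    obtain c s where x: "x = (c, s)" by (cases x)
    have c: "c \<in> ball p r" and s: "s \<in> J" using that x U'_def by auto
    obtain H where H: "\<forall>q\<in>U. ((\<lambda>q. u (q, s)) has_derivative (\<lambda>h. grad_xy u q s \<bullet> h)) (at q)"
      "\<forall>q\<in>U. ((\<lambda>q. grad_xy u q s) has_derivative H q) (at q)"
      "\<forall>w. continuous_on U (\<lambda>q. H q w)"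
      "\<forall>q\<in>U. fst (H q (1,0)) + snd (H q (0,1)) = 0"
      using grad_xy_harm[OF oU harm[rule_format, OF s]] by blast
    have r2: "r < 2 * r" using r by simp
    have fe: "f (c, s) = (\<lambda>t. complex_of_real (u ((fst c + r * cos (2 * pi * t), snd c + r * sin (2 * pi * t)), s)) *
                exp (2 * complex_of_real pi * \<i> * complex_of_real t))"
      by (rule ext) (simp add: f_def Q_def E_def)
    from harm_formula[OF oU H ball2[OF c] r r2] show ?thesis
      by (simp add: x X_def fe cbox_interval)
  qed
  have L3: "((\<lambda>x. grad_xy u (fst x) (snd x)) has_derivative
      (\<lambda>w. (2/r) *\<^sub>R (Re (integral (cbox 0 1) (fx (p, s0)) w), Im (integral (cbox 0 1) (fx (p, s0)) w)))) (at (p, s0) within U')"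
    by (rule has_derivative_transform_within[OF L2 zero_less_one x0]) (use Geq in auto)
  have "at (p, s0) within U' = at (p, s0) within U \<times> J"
  proof (rule at_within_nhd[of _ "ball p r \<times> UNIV"])
    show "(p, s0) \<in> ball p r \<times> UNIV" using r by simp
    show "open (ball p r \<times> (UNIV :: real set))" by (intro open_Times open_ball open_UNIV)
    show "U' \<inter> (ball p r \<times> UNIV) - {(p, s0)} = U \<times> J \<inter> (ball p r \<times> UNIV) - {(p, s0)}"
      using e by (auto simp: U'_def r_def)
  qed
  then show ?thesis using L3 by auto
qed



lemma partial_within_unique:
  assumes oU: "open U" and pU: "p \<in> U" and sJ: "s \<in> J"
    and F: "(F has_derivative D) (at (p, s) within U \<times> J)"
    and L: "((\<lambda>c. F (c, s)) has_derivative L) (at p)"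
  shows "(\<lambda>h. D (h, 0)) = L"
proof -
  have d1: "((\<lambda>c. (c, s)) has_derivative (\<lambda>h. (h, 0))) (at p within U)"
    by (auto intro!: derivative_eq_intros)
  have "(F has_derivative D) (at ((\<lambda>c. (c, s)) p) within (\<lambda>c. (c, s)) ` U)"
    by (rule has_derivative_subset[OF F]) (use sJ in auto)
  from diff_chain_within[OF d1 this]
  have "((\<lambda>c. F (c, s)) has_derivative (\<lambda>h. D (h, 0))) (at p within U)" by (simp add: o_def)
  then have "((\<lambda>c. F (c, s)) has_derivative (\<lambda>h. D (h, 0))) (at p)"
    using at_within_open[OF pU oU] by simp
  from has_derivative_unique[OF this L] show ?thesis .
qed

lemma lin_split:
  fixes D :: "'a::real_vector \<times> real \<Rightarrow> 'b::real_vector"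
  assumes "linear D" shows "D (h, \<sigma>) = D (h, 0) + \<sigma> *\<^sub>R D (0, 1)"
proof -
  have "D (h, \<sigma>) = D ((h, 0) + \<sigma> *\<^sub>R (0, 1))" by (rule arg_cong[of _ _ D]) simp
  also have "\<dots> = D (h, 0) + \<sigma> *\<^sub>R D (0, 1)"
    by (subst linear_add[OF assms], subst linear_cmul[OF assms], rule refl)
  finally show ?thesis .
qed

lemma dir_ok:
  fixes U :: "(real \<times> real) set" and I :: "real set"
  assumes oU: "open U" and pU: "p \<in> U" and iI: "is_interval I" and zI: "z \<in> I"
    and z'I: "z' \<in> I" and ne: "z' \<noteq> z" and iB: "i \<in> Basis" and e: "e > 0"
  shows "\<exists>d. 0 < \<bar>d\<bar> \<and> \<bar>d\<bar> < e \<and> (p, z) + d *\<^sub>R i \<in> U \<times> I"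
proof -
  obtain \<epsilon> where \<epsilon>: "\<epsilon> > 0" "ball p \<epsilon> \<subseteq> U" using oU pU open_contains_ball by blast
  have "i = ((1,0),0) \<or> i = ((0,1),0) \<or> i = ((0,0),1)"
    using iB by (auto simp: Basis_prod_def zero_prod_def)
  then show ?thesis
  proof (elim disjE)
    assume i: "i = ((1,0),0)"
    define d where "d = min e \<epsilon> / 2"
    have "dist p (p + (d, 0)) < \<epsilon>" using e \<epsilon> by (simp add: d_def dist_norm)
    then have "p + (d, 0) \<in> U" using \<epsilon> by auto
    then show ?thesis using e \<epsilon> zI by (intro exI[of _ d]) (auto simp: i d_def zero_prod_def[symmetric])
  next
    assume i: "i = ((0,1),0)"
    define d where "d = min e \<epsilon> / 2"
    have "dist p (p + (0, d)) < \<epsilon>" using e \<epsilon> by (simp add: d_def dist_norm)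
    then have "p + (0, d) \<in> U" using \<epsilon> by auto
    then show ?thesis using e \<epsilon> zI by (intro exI[of _ d]) (auto simp: i d_def zero_prod_def[symmetric])
  next
    assume i: "i = ((0,0),1)"
    show ?thesis
    proof (cases "z < z'")
      case True
      define d where "d = min e (z' - z) / 2"
      have "z + d \<in> I"
        by (rule mem_is_interval_1_I[OF iI zI z'I]) (use True e in \<open>auto simp: d_def min_def field_simps\<close>)
      then show ?thesis using e True pU by (intro exI[of _ d]) (auto simp: i d_def zero_prod_def[symmetric])
    next
      case False
      then have lt: "z' < z" using ne by simp
      define d where "d = - (min e (z - z') / 2)"
      have "z + d \<in> I"
        by (rule mem_is_interval_1_I[OF iI z'I zI]) (use lt e in \<open>auto simp: d_def min_def field_simps\<close>)
      then show ?thesis using e lt pU by (intro exI[of _ d]) (auto simp: i d_def zero_prod_def[symmetric])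
    qed
  qed
qed

lemma flat_shift:
  fixes F :: "(real \<times> real) \<times> real \<Rightarrow> (real \<times> real) \<times> real"
  assumes F: "(F has_derivative D) (at x within S)" and flat: "\<forall>y\<in>S. snd y = snd x" and xS: "x \<in> S"
  shows "(F has_derivative (\<lambda>w. D w + ((0,0), snd w * c))) (at x within S)"
proof -
  have "((\<lambda>y. F y + ((0,0), (snd y - snd x) * c)) has_derivative (\<lambda>w. D w + ((0,0), snd w * c))) (at x within S)"
    by (auto intro!: derivative_eq_intros F simp: zero_prod_def)
  then show ?thesis
    by (rule has_derivative_transform_within[OF _ zero_less_one xS]) (use flat in \<open>auto simp: zero_prod_def\<close>)
qed



theorem lemma3p1:
  fixes U :: "(real \<times> real) set" and I J :: "real set"
    and u :: "(real \<times> real) \<times> real \<Rightarrow> real"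
    and t :: "(real \<times> real) \<times> real \<Rightarrow> real"
  assumes "open U" and "is_interval I" and "is_interval J"
    and "u ` (U \<times> J) \<subseteq> I" and "C1_on (U \<times> J) u"
    and "\<forall>s\<in>J. harmonic_on U (\<lambda>p. u (p, s))"
    and "t ` (U \<times> I) \<subseteq> J" and "C1_on (U \<times> I) t"
    and "\<forall>p\<in>U. \<forall>z\<in>I. u (p, t (p, z)) = z"
  shows "divergence_free_on (U \<times> I) (phi_field u t)"
proof -
  obtain Dtf where Dtf: "\<forall>q\<in>U \<times> I. (t has_derivative Dtf q) (at q within U \<times> I)"
    using assms(8) unfolding C1_on_def by blast
  obtain Duf where Duf: "\<forall>q\<in>U \<times> J. (u has_derivative Duf q) (at q within U \<times> J)"
    using assms(5) unfolding C1_on_def by blast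
  define G where "G x = grad_xy u (fst x) (snd x)" for x
  define \<Phi> where "\<Phi> y = (fst y, t y)" for y :: "(real \<times> real) \<times> real"
  have phi_eq: "phi_field u t = (\<lambda>y. (2 *\<^sub>R G (\<Phi> y), G (\<Phi> y) \<bullet> G (\<Phi> y)))"
    by (rule ext) (auto simp: phi_field_def G_def \<Phi>_def Let_def power2_norm_eq_inner split: prod.splits)
  show ?thesis unfolding divergence_free_on_def
  proof
    fix q assume qS: "q \<in> U \<times> I"
    obtain p z where q: "q = (p, z)" and pU: "p \<in> U" and zI: "z \<in> I" using qS by auto
    define s0 where "s0 = t (p, z)"
    have s0J: "s0 \<in> J" using assms(7) qS q s0_def by auto
    obtain DG where DG: "(G has_derivative DG) (at (p, s0) within U \<times> J)"
      using grad_joint[OF assms(1,3,5,6) pU s0J] unfolding G_def by blast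
    obtain H where H: "\<forall>q\<in>U. ((\<lambda>q. u (q, s0)) has_derivative (\<lambda>h. grad_xy u q s0 \<bullet> h)) (at q)"
      "\<forall>q\<in>U. ((\<lambda>q. grad_xy u q s0) has_derivative H q) (at q)"
      "\<forall>w. continuous_on U (\<lambda>q. H q w)"
      "\<forall>q\<in>U. fst (H q (1,0)) + snd (H q (0,1)) = 0"
      using grad_xy_harm[OF assms(1) assms(6)[rule_format, OF s0J]] by blast
    define Dt where "Dt = Dtf q"
    have dt: "(t has_derivative Dt) (at q within U \<times> I)" using Dtf qS Dt_def by blast
    define Du where "Du = Duf (p, s0)"
    have du: "(u has_derivative Du) (at (p, s0) within U \<times> J)" using Duf pU s0J Du_def by blast
    have linDG: "linear DG" using DG has_derivative_linear by blast
    have linDu: "linear Du" using du has_derivative_linear by blast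
    have linDt: "linear Dt" using dt has_derivative_linear by blast
    have DGh: "DG (h, 0) = H p h" for h
    proof -
      have "((\<lambda>c. G (c, s0)) has_derivative H p) (at p)" using H(2) pU by (simp add: G_def)
      from partial_within_unique[OF assms(1) pU s0J DG this] show ?thesis by metis
    qed
    define g0 where "g0 = G (p, s0)"
    have Duh: "Du (h, 0) = g0 \<bullet> h" for h
    proof -
      have "((\<lambda>c. u (c, s0)) has_derivative (\<lambda>h. g0 \<bullet> h)) (at p)" using H(1) pU by (simp add: g0_def G_def)
      from partial_within_unique[OF assms(1) pU s0J du this] show ?thesis by metis
    qed
    have \<Phi>q: "\<Phi> q = (p, s0)" by (simp add: \<Phi>_def q s0_def)
    have d\<Phi>: "(\<Phi> has_derivative (\<lambda>w. (fst w, Dt w))) (at q within U \<times> I)"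
      unfolding \<Phi>_def by (intro derivative_eq_intros dt) (auto intro: dt)
    have \<Phi>img: "\<Phi> ` (U \<times> I) \<subseteq> U \<times> J" using assms(7) by (auto simp: \<Phi>_def)
    have dW: "((\<lambda>y. G (\<Phi> y)) has_derivative (\<lambda>w. DG (fst w, Dt w))) (at q within U \<times> I)"
    proof -
      have "(G has_derivative DG) (at (\<Phi> q) within \<Phi> ` (U \<times> I))"
        using has_derivative_subset[OF DG \<Phi>img] \<Phi>q by simp
      from diff_chain_within[OF d\<Phi> this] show ?thesis by (simp add: o_def)
    qed
    define D1 where "D1 w = (2 *\<^sub>R DG (fst w, Dt w), g0 \<bullet> DG (fst w, Dt w) + DG (fst w, Dt w) \<bullet> g0)" for w
    have dphi: "(phi_field u t has_derivative D1) (at q within U \<times> I)"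
      unfolding phi_eq D1_def g0_def \<Phi>q[symmetric]
      by (intro derivative_eq_intros dW) (auto intro: dW)
    show "\<exists>D. (phi_field u t has_derivative D) (at q within U \<times> I) \<and>
         fst (fst (D ((1,0),0))) + snd (fst (D ((0,1),0))) + snd (D ((0,0),1)) = 0"
    proof (cases "\<exists>z'\<in>I. z' \<noteq> z")
      case True
      then obtain z' where z': "z' \<in> I" "z' \<noteq> z" by blast
      have E0: "((\<lambda>y. u (\<Phi> y) - snd y) has_derivative (\<lambda>w. Du (fst w, Dt w) - snd w)) (at q within U \<times> I)"
      proof -
        have "(u has_derivative Du) (at (\<Phi> q) within \<Phi> ` (U \<times> I))"
          using has_derivative_subset[OF du \<Phi>img] \<Phi>q by simp
        from diff_chain_within[OF d\<Phi> this]
        have "((\<lambda>y. u (\<Phi> y)) has_derivative (\<lambda>w. Du (fst w, Dt w))) (at q within U \<times> I)"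
          by (simp add: o_def)
        then show ?thesis by (intro derivative_eq_intros) auto
      qed
      have Z0: "((\<lambda>y. u (\<Phi> y) - snd y) has_derivative (\<lambda>w. 0)) (at q within U \<times> I)"
        by (rule has_derivative_transform_within[OF has_derivative_const zero_less_one qS])
          (use assms(9) in \<open>auto simp: \<Phi>_def\<close>)
      have Eeq: "(\<lambda>w. Du (fst w, Dt w) - snd w) = (\<lambda>w. 0)"
        by (rule frechet_derivative_unique_within[OF E0 Z0])
          (use dir_ok[OF assms(1) pU assms(2) zI z'(1) z'(2)] q in blast)
      define \<tau>1 where "\<tau>1 = Dt ((1,0),0)"
      define \<tau>2 where "\<tau>2 = Dt ((0,1),0)"
      define \<beta> where "\<beta> = Dt ((0,0),1)"
      define a where "a = DG (0,1)"
      define \<gamma> where "\<gamma> = Du (0,1)"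
      have Dus: "Du (h, \<sigma>) = g0 \<bullet> h + \<sigma> * \<gamma>" for h \<sigma>
        using lin_split[OF linDu, of h \<sigma>] Duh by (simp add: \<gamma>_def)
      have DGs: "DG (h, \<sigma>) = H p h + \<sigma> *\<^sub>R a" for h \<sigma>
        using lin_split[OF linDG, of h \<sigma>] DGh by (simp add: a_def)
      have H0: "H p 0 = 0"
        using H(2) pU has_derivative_linear linear_0 by blast
      have f1: "fst g0 + \<tau>1 * \<gamma> = 0"
        using fun_cong[OF Eeq, of "((1,0),0)"] by (simp add: Dus \<tau>1_def inner_prod_def)
      have f2: "snd g0 + \<tau>2 * \<gamma> = 0"
        using fun_cong[OF Eeq, of "((0,1),0)"] by (simp add: Dus \<tau>2_def inner_prod_def)
      have f3: "\<beta> * \<gamma> = 1"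
        using fun_cong[OF Eeq, of "((0,0),1)"] by (simp add: Dus \<beta>_def inner_prod_def)
      have lap: "fst (H p (1,0)) + snd (H p (0,1)) = 0" using H(4) pU by blast
      have tr: "fst (fst (D1 ((1,0),0))) + snd (fst (D1 ((0,1),0))) + snd (D1 ((0,0),1))
          = 2 * (fst (H p (1,0)) + snd (H p (0,1)))
            + 2 * (\<tau>1 * fst a + \<tau>2 * snd a + \<beta> * (fst g0 * fst a + snd g0 * snd a))"
        by (simp add: D1_def DGs H0[unfolded zero_prod_def] \<tau>1_def[symmetric] \<tau>2_def[symmetric] \<beta>_def[symmetric]
            inner_prod_def algebra_simps)
      have "\<tau>1 * fst a + \<tau>2 * snd a + \<beta> * (fst g0 * fst a + snd g0 * snd a) = 0"
        using f1 f2 f3 by algebra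
      then show ?thesis using dphi tr lap by auto
    next
      case False
      then have flat: "\<forall>y\<in>U \<times> I. snd y = snd q" using q by auto
      define c where "c = - (fst (fst (D1 ((1,0),0))) + snd (fst (D1 ((0,1),0))) + snd (D1 ((0,0),1)))"
      have "(phi_field u t has_derivative (\<lambda>w. D1 w + ((0,0), snd w * c))) (at q within U \<times> I)"
        by (rule flat_shift[OF dphi flat qS])
      then show ?thesis by (intro exI[of _ "\<lambda>w. D1 w + ((0,0), snd w * c)"]) (simp add: c_def)
    qed
  qed
qed

end
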